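(* Let $\mathcal{Q}(z)=t(z)^2-\det\mathcal{T}(z)$ and $\lambda=z^2+z^{-2}$. Then $\mathcal{Q}(z)=\mathcal{Q}_{2N}(\lambda)$ where $\mathcal{Q}_{2N}$ is a polynomial of degree $2N$ in $\lambda$ (whose coefficients are functions on the phase space $M_{2N}$).
   Context: $SL_2^*$ denotes the Poisson variety with coordinate ring $\mathbf{C}[e,f,k^{\pm1}]$ and Poisson brackets $\{k,e\}=ke$, $\{k,f\}=-kf$, $\{e,f\}=2(k^2-k^{-2})$; $\omega=k^2+k^{-2}+ef$ is a Casimir and $\Sigma_t=\{\omega=t\}$ is a symplectic leaf. Fix $N\ge1$, $t_1,\dots,t_N\in\mathbf{C}$, $\xi\in\mathbf{C}^*$, $a_1,\dots,a_N\in\mathbf{C}^*$. The phase space is $M_{2N}=\Sigma_{t_1}\times\cdots\times\Sigma_{t_N}$ with coordinates $(e_j,f_j,k_j)$ at site $j$. Set $L_j(z)=\begin{pmatrix} zk_j-z^{-1}k_j^{-1} & e_j\\ f_j & zk_j^{-1}-z^{-1}k_j\end{pmatrix}$, $K(z)=\begin{pmatrix}\xi z-z^{-1}\xi^{-1}&0\\0&\xi z^{-1}-z\xi^{-1}\end{pmatrix}$, the reflection monodromy matrix $\mathcal{T}(z)=\frac{1}{z-z^{-1}}L_1(a_1z)\cdots L_N(a_Nz)\,K(z)\,L_N(z/a_N)\cdots L_1(z/a_1)$, and $t(z)=\frac12\operatorname{tr}\mathcal{T}(z)$. *)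

theory Defs
  imports "HOL-Analysis.Analysis"
begin

definition mat2 :: "complex \<Rightarrow> complex \<Rightarrow> complex \<Rightarrow> complex \<Rightarrow> complex^2^2" where
  "mat2 a b c d = vector [vector [a, b], vector [c, d]]"

definition Lmat :: "complex \<Rightarrow> complex \<Rightarrow> complex \<Rightarrow> complex \<Rightarrow> complex^2^2" where
  "Lmat e f k z = mat2 (z * k - inverse z * inverse k) e f (z * inverse k - inverse z * k)"

definition Kmat :: "complex \<Rightarrow> complex \<Rightarrow> complex^2^2" where
  "Kmat \<xi> z = mat2 (\<xi> * z - inverse z * inverse \<xi>) 0 0 (\<xi> * inverse z - z * inverse \<xi>)"

(* Reflection monodromy matrix: sites are indexed 1..N;
   T(z) = 1/(z - z^-1) L_1(a_1 z)...L_N(a_N z) K(z) L_N(z/a_N)...L_1(z/a_1) *)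
definition monodromy ::
  "nat \<Rightarrow> complex \<Rightarrow> (nat \<Rightarrow> complex) \<Rightarrow> (nat \<Rightarrow> complex) \<Rightarrow> (nat \<Rightarrow> complex) \<Rightarrow>
   (nat \<Rightarrow> complex) \<Rightarrow> complex \<Rightarrow> complex^2^2" where
  "monodromy N \<xi> a e f k z =
     mat (inverse (z - inverse z)) **
       (foldr (\<lambda>j M. Lmat (e j) (f j) (k j) (a j * z) ** M) [1..<N+1]
          (Kmat \<xi> z ** foldr (\<lambda>j M. M ** Lmat (e j) (f j) (k j) (z / a j)) [1..<N+1] (mat 1)))"

definition transfer ::
  "nat \<Rightarrow> complex \<Rightarrow> (nat \<Rightarrow> complex) \<Rightarrow> (nat \<Rightarrow> complex) \<Rightarrow> (nat \<Rightarrow> complex) \<Rightarrow>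
   (nat \<Rightarrow> complex) \<Rightarrow> complex \<Rightarrow> complex" where
  "transfer N \<xi> a e f k z = trace (monodromy N \<xi> a e f k z) / 2"

definition Qfun ::
  "nat \<Rightarrow> complex \<Rightarrow> (nat \<Rightarrow> complex) \<Rightarrow> (nat \<Rightarrow> complex) \<Rightarrow> (nat \<Rightarrow> complex) \<Rightarrow>
   (nat \<Rightarrow> complex) \<Rightarrow> complex \<Rightarrow> complex" where
  "Qfun N \<xi> a e f k z = (transfer N \<xi> a e f k z)^2 - det (monodromy N \<xi> a e f k z)"

definition phase_space ::
  "nat \<Rightarrow> (nat \<Rightarrow> complex) \<Rightarrow> ((nat \<Rightarrow> complex) \<times> (nat \<Rightarrow> complex) \<times> (nat \<Rightarrow> complex)) set" where
  "phase_space N t = {(e, f, k). \<forall>j\<in>{1..N}. k j \<noteq> 0 \<and>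
        (k j)^2 + (inverse (k j))^2 + e j * f j = t j}"

end

theory Submission imports Defs "HOL-Computational_Algebra.Polynomial" begin

lemma mat2_nth: "mat2 a b c d $ 1 $ 1 = a" "mat2 a b c d $ 1 $ 2 = b"
  "mat2 a b c d $ 2 $ 1 = c" "mat2 a b c d $ 2 $ 2 = d"
  by (simp_all add: mat2_def)

lemma mat2_eq_iff: "(A::complex^2^2) = mat2 a b c d \<longleftrightarrow> A$1$1 = a \<and> A$1$2 = b \<and> A$2$1 = c \<and> A$2$2 = d"
  by (auto simp: vec_eq_iff forall_2 mat2_nth)

lemma mat2_mult: "mat2 a b c d ** mat2 a' b' c' d' =
   mat2 (a*a'+b*c') (a*b'+b*d') (c*a'+d*c') (c*b'+d*d')"
  by (simp add: mat2_eq_iff matrix_matrix_mult_def sum_2 mat2_nth)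

lemma mat_mult_mat2: "mat x ** mat2 a b c d = mat2 (x*a) (x*b) (x*c) (x*d)"
  by (simp add: mat2_eq_iff matrix_matrix_mult_def sum_2 mat2_nth mat_def)

lemma trace_mat2: "trace (mat2 a b c d) = a + d"
  by (simp add: trace_def sum_2 mat2_nth)

lemma det_mat2: "det (mat2 a b c d) = a*d - b*c"
  by (simp add: det_2 mat2_nth)

lemma foldr_left_mult:
  "foldr (\<lambda>j M. A j ** M) xs (X ** Y) = foldr (\<lambda>j M. A j ** M) xs X ** Y"
  by (induction xs) (simp_all add: matrix_mul_assoc)

lemma foldr_sandwich:
  "foldr (\<lambda>j M. A j ** M) xs (K ** foldr (\<lambda>j M. M ** B j) xs (mat 1)) =
   foldr (\<lambda>j M. A j ** M ** B j) xs K"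
proof (induction xs)
  case Nil then show ?case by simp
next
  case (Cons x xs)
  have "foldr (\<lambda>j M. A j ** M) (x#xs) (K ** foldr (\<lambda>j M. M ** B j) (x#xs) (mat 1))
     = A x ** foldr (\<lambda>j M. A j ** M) xs ((K ** foldr (\<lambda>j M. M ** B j) xs (mat 1)) ** B x)"
    by (simp add: matrix_mul_assoc)
  also have "\<dots> = A x ** foldr (\<lambda>j M. A j ** M ** B j) xs K ** B x"
    by (simp only: foldr_left_mult[of A xs "K ** foldr (\<lambda>j M. M ** B j) xs (mat 1)" "B x"] Cons matrix_mul_assoc)
  finally show ?case by (simp add: matrix_mul_assoc)
qed

lemma step_mat:
  fixes u y l S D B C p1 q1 p2 q2 e f :: complex
  assumes u: "u^2 = l+2" and y: "y^2 = l-2"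
  shows "mat2 (p1*u+q1* y) e f (p2*u+q2* y) ** mat2 (u*S+y*D) (u* y*B) (u* y*C) (u*S-y*D)
     ** mat2 (-p2*u+q2* y) e f (-p1*u+q1* y) =
   mat2 (u*(e*f*S + (l-2)*(q2*e*C + q1*f*B + q1*q2*S - q1*p2*D + p1*q2*D) - (l+2)*p1*p2*S)
          + y*(-e*f*D - (l+2)*(p2*e*C - p1*f*B - p1*q2*S + q1*p2*S + p1*p2*D) + (l-2)*q1*q2*D))
        (u* y*(e^2*C + 2*q1*e*S + 2*p1*e*D + (l-2)*q1^2*B - (l+2)*p1^2*B))
        (u* y*(f^2*B + 2*q2*f*S - 2*p2*f*D + (l-2)*q2^2*C - (l+2)*p2^2*C))
        (u*(e*f*S + (l-2)*(q2*e*C + q1*f*B + q1*q2*S - q1*p2*D + p1*q2*D) - (l+2)*p1*p2*S)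
          - y*(-e*f*D - (l+2)*(p2*e*C - p1*f*B - p1*q2*S + q1*p2*S + p1*p2*D) + (l-2)*q1*q2*D))"
proof -
  have l1: "l = u^2 - 2" using u by simp
  have y2: "y^2 = u^2 - 4" using u y by simp
  show ?thesis unfolding mat2_mult mat2_eq_iff mat2_nth l1
    using y2 by (intro conjI; algebra)
qed

definition pc :: "complex \<Rightarrow> complex" where "pc x = (x - inverse x)/2"
definition qc :: "complex \<Rightarrow> complex" where "qc x = (x + inverse x)/2"

lemma half_aux: "((X - IX)/2)*(Z+IZ) + ((X+IX)/2)*(Z - IZ) = X*Z - IX*(IZ::complex)"
  "-((X - IX)/2)*(Z+IZ) + ((X+IX)/2)*(Z - IZ) = IX*Z - X*(IZ::complex)"
  "(Z+IZ)*((X - IX)/2) + (Z - IZ)*((X+IX)/2) = X*Z - IX*(IZ::complex)"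
  "(Z+IZ)*((X - IX)/2) - (Z - IZ)*((X+IX)/2) = X*IZ - IX*(Z::complex)"
  by (simp_all add: field_simps)

lemma pq_decomp: "pc x * (z + inverse z) + qc x * (z - inverse z) = x*z - inverse x * inverse z"
  "- pc x * (z + inverse z) + qc x * (z - inverse z) = inverse x*z - x * inverse z"
  unfolding pc_def qc_def by (simp_all only: half_aux)

lemma Lmat_az: "Lmat e f k (a*z) = mat2 (pc (a*k) * (z + inverse z) + qc (a*k) * (z - inverse z)) e f
      (pc (a*inverse k) * (z + inverse z) + qc (a*inverse k) * (z - inverse z))"
  unfolding Lmat_def pq_decomp by (simp add: algebra_simps)

lemma Lmat_za: "Lmat e f k (z/a) = mat2 (- pc (a*inverse k) * (z + inverse z) + qc (a*inverse k) * (z - inverse z)) e f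
      (- pc (a*k) * (z + inverse z) + qc (a*k) * (z - inverse z))"
  unfolding Lmat_def pq_decomp by (simp add: algebra_simps divide_inverse)

lemma Kmat_dec: "Kmat \<xi> z = mat2 ((z + inverse z) * ((\<xi> - inverse \<xi>)/2) + (z - inverse z) * ((\<xi> + inverse \<xi>)/2)) 0 0
   ((z + inverse z) * ((\<xi> - inverse \<xi>)/2) - (z - inverse z) * ((\<xi> + inverse \<xi>)/2))"
proof -
  have "\<xi> * z - inverse z * inverse \<xi> = (z + inverse z) * ((\<xi> - inverse \<xi>)/2) + (z - inverse z) * ((\<xi> + inverse \<xi>)/2)"
    "\<xi> * inverse z - z * inverse \<xi> = (z + inverse z) * ((\<xi> - inverse \<xi>)/2) - (z - inverse z) * ((\<xi> + inverse \<xi>)/2)"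
    by (simp_all only: half_aux) (simp_all add: algebra_simps)
  then show ?thesis unfolding Kmat_def by simp
qed

type_synonym P4 = "complex poly \<times> complex poly \<times> complex poly \<times> complex poly"

definition stepQ :: "complex \<Rightarrow> complex \<Rightarrow> complex \<Rightarrow> complex \<Rightarrow> complex \<Rightarrow> complex \<Rightarrow> P4 \<Rightarrow> P4" where
"stepQ p1 q1 p2 q2 e f X = (case X of (s,d,b,c) \<Rightarrow>
 (smult (e*f) s + [:-2,1:] * (smult (q2*e) c + smult (q1*f) b + smult (q1*q2) s - smult (q1*p2) d + smult (p1*q2) d) - [:2,1:] * smult (p1*p2) s,
  - smult (e*f) d - [:2,1:] * (smult (p2*e) c - smult (p1*f) b - smult (p1*q2) s + smult (q1*p2) s + smult (p1*p2) d) + [:-2,1:] * smult (q1*q2) d,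
  smult (e^2) c + smult (2*q1*e) s + smult (2*p1*e) d + [:-2,1:] * smult (q1^2) b - [:2,1:] * smult (p1^2) b,
  smult (f^2) b + smult (2*q2*f) s - smult (2*p2*f) d + [:-2,1:] * smult (q2^2) c - [:2,1:] * smult (p2^2) c))"

fun sdbc :: "complex \<Rightarrow> (nat \<Rightarrow> complex) \<Rightarrow> (nat \<Rightarrow> complex) \<Rightarrow> (nat \<Rightarrow> complex) \<Rightarrow> (nat \<Rightarrow> complex) \<Rightarrow> nat list \<Rightarrow> P4" where
  "sdbc \<xi> a e f k [] = ([:(\<xi> - inverse \<xi>)/2:], [:(\<xi> + inverse \<xi>)/2:], 0, 0)"
| "sdbc \<xi> a e f k (j#js) = stepQ (pc (a j * k j)) (qc (a j * k j)) (pc (a j * inverse (k j))) (qc (a j * inverse (k j))) (e j) (f j) (sdbc \<xi> a e f k js)"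

definition repM :: "complex \<Rightarrow> P4 \<Rightarrow> complex^2^2" where
  "repM z X = (case X of (s,d,b,c) \<Rightarrow>
     (let u = z + inverse z; y = z - inverse z; l = z^2 + inverse z ^2 in
       mat2 (u*poly s l + y*poly d l) (u*y*poly b l) (u*y*poly c l) (u*poly s l - y*poly d l)))"

lemma rep_step:
  assumes "z \<noteq> 0"
  shows "mat2 (p1*(z + inverse z)+q1*(z - inverse z)) e f (p2*(z + inverse z)+q2*(z - inverse z)) ** repM z X
     ** mat2 (-p2*(z + inverse z)+q2*(z - inverse z)) e f (-p1*(z + inverse z)+q1*(z - inverse z)) =
     repM z (stepQ p1 q1 p2 q2 e f X)"
proof -
  obtain s d b c where X: "X = (s,d,b,c)" by (cases X) auto
  define u where "u = z + inverse z"
  define y where "y = z - inverse z"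
  define l where "l = z^2 + inverse z ^2"
  have zz: "z * inverse z = 1" using assms by simp
  have u2: "u^2 = l+2" unfolding u_def l_def power2_eq_square using zz by algebra
  have y2: "y^2 = l-2" unfolding y_def l_def power2_eq_square using zz by algebra
  show ?thesis
    unfolding X repM_def stepQ_def Let_def prod.case u_def[symmetric] y_def[symmetric] l_def[symmetric]
    by (subst step_mat[OF u2 y2]) (simp add: algebra_simps)
qed

lemma rep_fold:
  assumes "z \<noteq> 0"
  shows "foldr (\<lambda>j M. Lmat (e j) (f j) (k j) (a j * z) ** M ** Lmat (e j) (f j) (k j) (z / a j)) js (Kmat \<xi> z)
     = repM z (sdbc \<xi> a e f k js)"
proof (induction js)
  case Nil
  show ?case unfolding Kmat_dec by (simp add: repM_def Let_def mult.commute)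
next
  case (Cons j js)
  show ?case
    apply (simp only: foldr_Cons comp_def Cons.IH)
    apply (simp only: Lmat_az Lmat_za rep_step[OF assms])
    by simp
qed

lemma monodromy_rep:
  assumes "z \<noteq> 0"
  shows "monodromy N \<xi> a e f k z = mat (inverse (z - inverse z)) ** repM z (sdbc \<xi> a e f k [1..<N+1])"
  unfolding monodromy_def foldr_sandwich rep_fold[OF assms] ..

definition Qp :: "P4 \<Rightarrow> complex poly" where
  "Qp X = (case X of (s,d,b,c) \<Rightarrow> d^2 + [:2,1:]*b*c)"

lemma Qfun_rep:
  assumes "z \<noteq> 0" "z^2 \<noteq> 1"
  shows "Qfun N \<xi> a e f k z = poly (Qp (sdbc \<xi> a e f k [1..<N+1])) (z^2 + inverse z ^2)"
proof -
  obtain s d b c where X: "sdbc \<xi> a e f k [1..<N+1] = (s,d,b,c)" by (cases "sdbc \<xi> a e f k [1..<N+1]") auto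
  define u where "u = z + inverse z"
  define y where "y = z - inverse z"
  define l where "l = z^2 + inverse z ^2"
  have zz: "z * inverse z = 1" using assms by simp
  have u2: "u^2 = l+2" unfolding u_def l_def power2_eq_square using zz by algebra
  have yne: "y \<noteq> 0"
  proof
    assume "y = 0"
    then have "z * y = 0" by simp
    then have "z^2 - 1 = 0" unfolding y_def power2_eq_square using zz by (simp add: algebra_simps)
    then show False using assms(2) by simp
  qed
  define S where "S = poly s l"
  define D where "D = poly d l"
  define B where "B = poly b l"
  define C where "C = poly c l"
  have "Qfun N \<xi> a e f k z = ((inverse y * (u*S + y*D) + inverse y * (u*S - y*D))/2)^2
      - (inverse y * (u*S + y*D) * (inverse y * (u*S - y*D)) - inverse y * (u*y*B) * (inverse y * (u*y*C)))"
    unfolding Qfun_def transfer_def monodromy_rep[OF assms(1)] X repM_def Let_def prod.case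
      mat_mult_mat2 trace_mat2 det_mat2 u_def[symmetric] y_def[symmetric] l_def[symmetric]
      S_def[symmetric] D_def[symmetric] B_def[symmetric] C_def[symmetric] ..
  also have "\<dots> = D^2 + (l+2)*B*C"
    using yne u2 by (simp add: field_simps) algebra
  finally show ?thesis unfolding X Qp_def l_def S_def D_def B_def C_def
    by (simp add: algebra_simps power2_eq_square)
qed

lemma coeff_lin: "coeff ([:c,1:] * (p::complex poly)) i = c * coeff p i + (if i = 0 then 0 else coeff p (i - 1))"
  by (cases i) (simp_all add: mult_pCons_left)

lemma stepQ_bounds:
  assumes X: "stepQ p1 q1 p2 q2 e f (s,d,b,c) = (s',d',b',c')"
    and hs: "\<And>i. i>n \<Longrightarrow> coeff s i = 0" and hd: "\<And>i. i>n \<Longrightarrow> coeff d i = 0"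
    and hb: "\<And>i. i\<ge>n \<Longrightarrow> coeff b i = 0" and hc: "\<And>i. i\<ge>n \<Longrightarrow> coeff c i = 0"
  shows "\<And>i. i > Suc n \<Longrightarrow> coeff s' i = 0" "\<And>i. i > Suc n \<Longrightarrow> coeff d' i = 0"
    "\<And>i. i \<ge> Suc n \<Longrightarrow> coeff b' i = 0" "\<And>i. i \<ge> Suc n \<Longrightarrow> coeff c' i = 0"
    "coeff s' (Suc n) = (q1*q2 - p1*p2) * coeff s n + (p1*q2 - q1*p2) * coeff d n"
    "coeff d' (Suc n) = (q1*q2 - p1*p2) * coeff d n + (p1*q2 - q1*p2) * coeff s n"
proof -
  have E: "s' = smult (e*f) s + [:-2,1:] * (smult (q2*e) c + smult (q1*f) b + smult (q1*q2) s - smult (q1*p2) d + smult (p1*q2) d) - [:2,1:] * smult (p1*p2) s"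
    "d' = - smult (e*f) d - [:2,1:] * (smult (p2*e) c - smult (p1*f) b - smult (p1*q2) s + smult (q1*p2) s + smult (p1*p2) d) + [:-2,1:] * smult (q1*q2) d"
    "b' = smult (e^2) c + smult (2*q1*e) s + smult (2*p1*e) d + [:-2,1:] * smult (q1^2) b - [:2,1:] * smult (p1^2) b"
    "c' = smult (f^2) b + smult (2*q2*f) s - smult (2*p2*f) d + [:-2,1:] * smult (q2^2) c - [:2,1:] * smult (p2^2) c"
    using X unfolding stepQ_def prod.case prod.inject by (metis)+
  note C = coeff_add coeff_diff coeff_smult coeff_minus coeff_lin
  show "\<And>i. i > Suc n \<Longrightarrow> coeff s' i = 0" "\<And>i. i > Suc n \<Longrightarrow> coeff d' i = 0"
    "\<And>i. i \<ge> Suc n \<Longrightarrow> coeff b' i = 0" "\<And>i. i \<ge> Suc n \<Longrightarrow> coeff c' i = 0"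
    unfolding E C by (simp_all add: hs hd hb hc)
  show "coeff s' (Suc n) = (q1*q2 - p1*p2) * coeff s n + (p1*q2 - q1*p2) * coeff d n"
    "coeff d' (Suc n) = (q1*q2 - p1*p2) * coeff d n + (p1*q2 - q1*p2) * coeff s n"
    unfolding E C by (simp_all add: hs hd hb hc algebra_simps)
qed

lemma sdbc_bounds:
  "sdbc \<xi> a e f k js = (s,d,b,c) \<Longrightarrow> (\<forall>i>length js. coeff s i = 0) \<and> (\<forall>i>length js. coeff d i = 0)
     \<and> (\<forall>i\<ge>length js. coeff b i = 0) \<and> (\<forall>i\<ge>length js. coeff c i = 0)"
proof (induction js arbitrary: s d b c)
  case Nil
  then show ?case by (auto simp: coeff_pCons split: nat.splits)
next
  case (Cons j js)
  obtain s0 d0 b0 c0 where X: "sdbc \<xi> a e f k js = (s0,d0,b0,c0)" by (cases "sdbc \<xi> a e f k js") auto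
  note IH = Cons.IH[OF X]
  have st: "stepQ (pc (a j * k j)) (qc (a j * k j)) (pc (a j * inverse (k j))) (qc (a j * inverse (k j))) (e j) (f j) (s0,d0,b0,c0) = (s,d,b,c)"
    using Cons.prems X by simp
  note B = stepQ_bounds[OF st, of "length js"]
  show ?case using IH B by simp
qed

lemma factor_id:
  assumes "a \<noteq> 0" "k \<noteq> 0"
  shows "(qc (a*k) * qc (a*inverse k) - pc (a*k) * pc (a*inverse k)) + (pc (a*k) * qc (a*inverse k) - qc (a*k) * pc (a*inverse k)) = k^2"
    "(qc (a*k) * qc (a*inverse k) - pc (a*k) * pc (a*inverse k)) - (pc (a*k) * qc (a*inverse k) - qc (a*k) * pc (a*inverse k)) = inverse k^2"
  using assms by (simp_all add: pc_def qc_def field_simps power2_eq_square) 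

lemma sdbc_top:
  "\<forall>j\<in>set js. a j \<noteq> 0 \<and> k j \<noteq> 0 \<Longrightarrow> sdbc \<xi> a e f k js = (s,d,b,c) \<Longrightarrow>
    coeff s (length js) + coeff d (length js) = \<xi> * prod_list (map (\<lambda>j. k j^2) js) \<and>
    coeff d (length js) - coeff s (length js) = inverse (\<xi> * prod_list (map (\<lambda>j. k j^2) js))"
proof (induction js arbitrary: s d b c)
  case Nil
  then show ?case by (auto simp: field_simps)
next
  case (Cons j js)
  obtain s0 d0 b0 c0 where X: "sdbc \<xi> a e f k js = (s0,d0,b0,c0)" by (cases "sdbc \<xi> a e f k js") auto
  have IH: "coeff s0 (length js) + coeff d0 (length js) = \<xi> * prod_list (map (\<lambda>j. k j^2) js) \<and>
    coeff d0 (length js) - coeff s0 (length js) = inverse (\<xi> * prod_list (map (\<lambda>j. k j^2) js))"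
    using Cons.IH[OF _ X] Cons.prems by simp
  have st: "stepQ (pc (a j * k j)) (qc (a j * k j)) (pc (a j * inverse (k j))) (qc (a j * inverse (k j))) (e j) (f j) (s0,d0,b0,c0) = (s,d,b,c)"
    using Cons.prems X by simp
  have bnd: "(\<forall>i>length js. coeff s0 i = 0) \<and> (\<forall>i>length js. coeff d0 i = 0)
     \<and> (\<forall>i\<ge>length js. coeff b0 i = 0) \<and> (\<forall>i\<ge>length js. coeff c0 i = 0)"
    using sdbc_bounds[OF X] .
  note B = stepQ_bounds[OF st, of "length js"]
  have nz: "a j \<noteq> 0" "k j \<noteq> 0" using Cons.prems by auto
  define al where "al = qc (a j * k j) * qc (a j * inverse (k j)) - pc (a j * k j) * pc (a j * inverse (k j))"
  define be where "be = pc (a j * k j) * qc (a j * inverse (k j)) - qc (a j * k j) * pc (a j * inverse (k j))"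
  have F: "al + be = k j ^2" "al - be = inverse (k j) ^2" unfolding al_def be_def using factor_id[OF nz] by auto
  have cs: "coeff s (Suc (length js)) = al * coeff s0 (length js) + be * coeff d0 (length js)"
     "coeff d (Suc (length js)) = al * coeff d0 (length js) + be * coeff s0 (length js)"
    using B bnd unfolding al_def be_def by auto
  have "coeff s (Suc (length js)) + coeff d (Suc (length js)) = (al+be) * (coeff s0 (length js) + coeff d0 (length js))"
    unfolding cs by (simp add: algebra_simps)
  moreover have "coeff d (Suc (length js)) - coeff s (Suc (length js)) = (al-be) * (coeff d0 (length js) - coeff s0 (length js))"
    unfolding cs by (simp add: algebra_simps)
  ultimately have R: "coeff s (Suc (length js)) + coeff d (Suc (length js)) = k j^2 * (\<xi> * prod_list (map (\<lambda>j. k j^2) js))"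
     "coeff d (Suc (length js)) - coeff s (Suc (length js)) = inverse (k j)^2 * inverse (\<xi> * prod_list (map (\<lambda>j. k j^2) js))"
    using IH F by simp_all
  show ?case unfolding length_Cons list.map prod_list.Cons R
    by (simp add: power_inverse mult.commute mult.left_commute)
qed

lemma coeff_mult_top:
  fixes p q :: "complex poly"
  assumes "degree p \<le> n" "degree q \<le> m"
  shows "coeff (p*q) (n+m) = coeff p n * coeff q m"
proof (cases "degree p = n \<and> degree q = m")
  case True
  then show ?thesis using coeff_mult_degree_sum[of p q] by simp
next
  case False
  then have lt: "degree p < n \<or> degree q < m" using assms by auto
  then have "coeff p n = 0 \<or> coeff q m = 0" by (auto intro: coeff_eq_0)
  moreover have "coeff (p*q) (n+m) = 0"
  proof (rule coeff_eq_0)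
    show "degree (p*q) < n+m" using lt assms degree_mult_le[of p q] by linarith
  qed
  ultimately show ?thesis by auto
qed

lemma Qp_props:
  assumes X: "sdbc \<xi> a e f k js = (s,d,b,c)"
  shows "degree (Qp (s,d,b,c)) \<le> 2*length js" "coeff (Qp (s,d,b,c)) (2*length js) = coeff d (length js) ^2"
proof -
  define n where "n = length js"
  note bnd = sdbc_bounds[OF X, folded n_def]
  have dd: "degree d \<le> n" using bnd by (auto intro: degree_le)
  have bc: "degree ([:2,1:]*b*c) < 2*n \<or> [:2,1:]*b*c = 0"
  proof (cases "n = 0")
    case True
    then have "b = 0" using bnd by (auto intro: poly_eqI)
    then show ?thesis by simp
  next
    case False
    have "degree b \<le> n - 1" "degree c \<le> n - 1" using bnd False by (auto intro!: degree_le)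
    moreover have "degree ([:2,1:]*b*c) \<le> degree ([:2,1::complex:]) + degree b + degree c"
      using degree_mult_le[of "[:2,1:]*b" c] degree_mult_le[of "[:2,1::complex:]" b] by linarith
    moreover have "degree ([:2,1::complex:]) = 1" by simp
    ultimately have "degree ([:2,1:]*b*c) < 2*n" using False by linarith
    then show ?thesis by blast
  qed
  have d2: "degree (d^2) \<le> 2*n" using degree_mult_le[of d d] dd by (simp add: power2_eq_square)
  show "degree (Qp (s,d,b,c)) \<le> 2*length js"
    unfolding Qp_def prod.case n_def[symmetric]
  proof -
    have "degree ([:2,1:]*b*c) \<le> 2*n" using bc by auto
    then show "degree (d^2 + [:2,1:]*b*c) \<le> 2*n" using d2 by (rule_tac degree_add_le) auto
  qed
  have c0: "coeff ([:2,1:]*b*c) (2*n) = 0" using bc by (auto intro: coeff_eq_0)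
  show "coeff (Qp (s,d,b,c)) (2*length js) = coeff d (length js) ^2"
    unfolding Qp_def prod.case n_def[symmetric] coeff_add c0
    using coeff_mult_top[OF dd dd] by (simp add: power2_eq_square mult_2)
qed

theorem mainTheorem4:
  fixes N :: nat and \<xi> :: complex and t a :: "nat \<Rightarrow> complex"
  assumes "N \<ge> 1" and "\<xi> \<noteq> 0" and "\<forall>j\<in>{1..N}. a j \<noteq> 0"
  shows "\<exists>c :: nat \<Rightarrow> (nat \<Rightarrow> complex) \<times> (nat \<Rightarrow> complex) \<times> (nat \<Rightarrow> complex) \<Rightarrow> complex.
           (\<forall>(e, f, k) \<in> phase_space N t. \<forall>z::complex. z \<noteq> 0 \<and> z^2 \<noteq> 1 \<longrightarrow>
              Qfun N \<xi> a e f k z = (\<Sum>i\<le>2*N. c i (e, f, k) * (z^2 + (inverse z)^2)^i))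
         \<and> (\<exists>p \<in> phase_space N t. c (2*N) p \<noteq> 0)"
proof -
  define c where "c = (\<lambda>i (p :: (nat \<Rightarrow> complex) \<times> (nat \<Rightarrow> complex) \<times> (nat \<Rightarrow> complex)).
      coeff (Qp (case p of (e,f,k) \<Rightarrow> sdbc \<xi> a e f k [1..<N+1])) i)"
  have len: "length [1..<N+1] = N" by simp
  have part1: "Qfun N \<xi> a e f k z = (\<Sum>i\<le>2*N. c i (e, f, k) * (z^2 + (inverse z)^2)^i)"
    if z: "z \<noteq> 0" "z^2 \<noteq> 1" for e f k z
  proof -
    obtain s d b cc where X: "sdbc \<xi> a e f k [1..<N+1] = (s,d,b,cc)"
      by (cases "sdbc \<xi> a e f k [1..<N+1]") auto
    have dg: "degree (Qp (s,d,b,cc)) \<le> 2*N" using Qp_props(1)[OF X] len by simp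
    have "Qfun N \<xi> a e f k z = poly (Qp (s,d,b,cc)) (z^2 + inverse z ^2)"
      using Qfun_rep[OF z, of N \<xi> a e f k] X by simp
    also have "\<dots> = poly (\<Sum>i\<le>2*N. monom (coeff (Qp (s,d,b,cc)) i) i) (z^2 + inverse z ^2)"
      using poly_as_sum_of_monoms'[OF dg] by simp
    also have "\<dots> = (\<Sum>i\<le>2*N. c i (e, f, k) * (z^2 + (inverse z)^2)^i)"
      unfolding c_def prod.case X by (simp add: poly_sum poly_monom)
    finally show ?thesis .
  qed
  define \<kappa> where "\<kappa> = (if \<xi>^2 = -1 then complex_of_real (sqrt 2) else 1)"
  have \<kappa>2: "\<kappa>^2 = (if \<xi>^2 = -1 then 2 else 1)"
    unfolding \<kappa>_def by (simp flip: of_real_power)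
  have \<kappa>nz: "\<kappa> \<noteq> 0" using \<kappa>2 by (auto split: if_splits)
  define k0 where "k0 = (\<lambda>j::nat. if j = 1 then \<kappa> else 1)"
  define e0 where "e0 = (\<lambda>j. t j - k0 j ^2 - inverse (k0 j) ^2)"
  define f0 where "f0 = (\<lambda>j::nat. (1::complex))"
  have k0nz: "k0 j \<noteq> 0" for j unfolding k0_def using \<kappa>nz by auto
  have inps: "(e0, f0, k0) \<in> phase_space N t"
    unfolding phase_space_def using k0nz by (auto simp: e0_def f0_def)
  obtain s d b cc where X: "sdbc \<xi> a e0 f0 k0 [1..<N+1] = (s,d,b,cc)"
    by (cases "sdbc \<xi> a e0 f0 k0 [1..<N+1]") auto
  define P where "P = prod_list (map (\<lambda>j. k0 j^2) [1..<N+1])"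
  have "P = prod (\<lambda>j. k0 j^2) {1..<N+1}"
    unfolding P_def by (subst prod.distinct_set_conv_list[symmetric]) (simp_all only: distinct_upt set_upt)
  also have "\<dots> = prod (\<lambda>j. if j = 1 then \<kappa>^2 else 1) {1..<N+1}"
    by (rule prod.cong) (auto simp: k0_def)
  also have "\<dots> = \<kappa>^2" using assms(1) by simp
  finally have P: "P = \<kappa>^2" .
  have top: "coeff s N + coeff d N = \<xi> * P \<and> coeff d N - coeff s N = inverse (\<xi> * P)"
  proof -
    have hyp: "\<forall>j\<in>set [1..<N+1]. a j \<noteq> 0 \<and> k0 j \<noteq> 0" using assms(3) k0nz by auto
    show ?thesis using sdbc_top[OF hyp X, folded P_def] unfolding len .
  qed
  have Pnz: "\<xi> * P \<noteq> 0" using P \<kappa>nz assms(2) by simp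
  have dN: "coeff d N = (\<xi>*P + inverse (\<xi>*P))/2"
  proof -
    have "2 * coeff d N = (coeff s N + coeff d N) + (coeff d N - coeff s N)" by simp
    then have "2 * coeff d N = \<xi>*P + inverse (\<xi>*P)" using top by simp
    then show ?thesis by (simp add: mult.commute)
  qed
  have ne: "\<xi>*P + inverse (\<xi>*P) \<noteq> 0"
  proof
    assume h: "\<xi>*P + inverse (\<xi>*P) = 0"
    have "(\<xi>*P)^2 + 1 = (\<xi>*P) * (\<xi>*P + inverse (\<xi>*P))" using Pnz by (simp add: field_simps power2_eq_square)
    then have "\<xi>^2 * P^2 = -1" using h by (simp add: power_mult_distrib eq_neg_iff_add_eq_0)
    then show False using P \<kappa>2 by (cases "\<xi>^2 = -1") (auto simp: power_mult_distrib)
  qed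
  have "c (2*N) (e0,f0,k0) = coeff d N ^2"
    unfolding c_def prod.case X using Qp_props(2)[OF X] len by simp
  then have "c (2*N) (e0,f0,k0) \<noteq> 0" using dN ne by simp
  then show ?thesis using part1 inps by blast
qed

end
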